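(* Let $G$ be a finite graph whose edges are totally ordered and labelled $e_1<e_2<\dots<e_m$. Suppose that for some $i$ and some $k>0$ the edges $e_i,e_{i+1},\dots,e_{i+k}$ are all positive and form a path $P_{k+1}$ in $G$, traversed in this order (so consecutive edges $e_{i+r},e_{i+r+1}$ share an interior vertex of the path), and that every interior vertex of this path has degree exactly two in $G$. Let $S$ be any spanning tree of $G$. Then the subword of the activity word $a(S)$ formed by the letters at positions $i,\dots,i+k$ (i.e. $a(e_i,S)a(e_{i+1},S)\cdots a(e_{i+k},S)$) is one of the following: (1) when $S$ contains all edges of $P_{k+1}$: $L L\cdots L$ or $D D\cdots D$ (all $k+1$ letters equal); (2) when $S$ omits exactly the edge $e_{i+j}$ of $P_{k+1}$ for some $0<j\le k$: $L^{j}\,d\,D^{k-j}$, i.e. $e_i,\dots,e_{i+j-1}$ are labelled $L$, $e_{i+j}$ is labelled $d$, and $e_{i+j+1},\dots,e_{i+k}$ are labelled $D$; (3) when $S$ omits exactly the first edge $e_i$: $\ell\, D^{k}$ or $d\,D^{k}$.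
   Context: Tutte's activity: let $G$ be a graph with signed edges (each edge positive or negative) whose $m$ edges are totally ordered. For a spanning tree $S$ of $G$ and an edge $e$: if $e\in S$ and $e$ is positive, $e$ is internally active, letter $L$, if $e$ is the lowest-ordered edge of $G$ that reconnects the two components of $S-\{e\}$, and internally inactive, letter $D$, otherwise. If $e\notin S$ and $e$ is positive, $e$ is externally active, letter $\ell$, if $e$ is the lowest-ordered edge of the unique cycle contained in $S\cup\{e\}$, and externally inactive, letter $d$, otherwise. For negative edges the same rules give the barred letters $\overline{L},\overline{D},\overline{\ell},\overline{d}$. The letter of $e$ is denoted $a(e,S)$, and the activity word $a(S)$ is the word of length $m$ whose $r$-th letter is $a(e_r,S)$. *)

theory Defs
  imports Main
begin

text \<open>A finite (multi)graph with vertex set V and edges labelled 1..m in their total order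
  e_1 < ... < e_m; edge r has endpoints ends r (unordered: the pair order is irrelevant),
  loops allowed. pos r says whether edge r is positive.\<close>

definition graph :: "'v set \<Rightarrow> nat \<Rightarrow> (nat \<Rightarrow> 'v \<times> 'v) \<Rightarrow> bool" where
  "graph V m ends \<longleftrightarrow> finite V \<and> (\<forall>r\<in>{1..m}. fst (ends r) \<in> V \<and> snd (ends r) \<in> V)"

definition incident :: "(nat \<Rightarrow> 'v \<times> 'v) \<Rightarrow> nat \<Rightarrow> 'v \<Rightarrow> bool" where
  "incident ends r v \<longleftrightarrow> v = fst (ends r) \<or> v = snd (ends r)"

text \<open>degree of v in G: number of edge-ends at v (a loop counts twice)\<close>
definition degree :: "nat \<Rightarrow> (nat \<Rightarrow> 'v \<times> 'v) \<Rightarrow> 'v \<Rightarrow> nat" where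
  "degree m ends v = card {r\<in>{1..m}. fst (ends r) = v} + card {r\<in>{1..m}. snd (ends r) = v}"

definition adj :: "(nat \<Rightarrow> 'v \<times> 'v) \<Rightarrow> nat set \<Rightarrow> ('v \<times> 'v) set" where
  "adj ends F = {(x, y). \<exists>r\<in>F. (x, y) = ends r \<or> (y, x) = ends r}"

definition conn :: "(nat \<Rightarrow> 'v \<times> 'v) \<Rightarrow> nat set \<Rightarrow> 'v \<Rightarrow> 'v \<Rightarrow> bool" where
  "conn ends F x y \<longleftrightarrow> (x, y) \<in> (adj ends F)\<^sup>*"

definition spanning_tree :: "'v set \<Rightarrow> nat \<Rightarrow> (nat \<Rightarrow> 'v \<times> 'v) \<Rightarrow> nat set \<Rightarrow> bool" where
  "spanning_tree V m ends S \<longleftrightarrow> S \<subseteq> {1..m}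
     \<and> (\<forall>x\<in>V. \<forall>y\<in>V. conn ends S x y)
     \<and> (\<forall>r\<in>S. \<not> conn ends (S - {r}) (fst (ends r)) (snd (ends r)))"

text \<open>for e in S: f reconnects the two components of S - {e}\<close>
definition reconnects :: "(nat \<Rightarrow> 'v \<times> 'v) \<Rightarrow> nat set \<Rightarrow> nat \<Rightarrow> nat \<Rightarrow> bool" where
  "reconnects ends S e f \<longleftrightarrow> \<not> conn ends (S - {e}) (fst (ends f)) (snd (ends f))"

text \<open>for e not in S: the edges of the unique cycle in S \<union> {e} are e together with the tree
  edges f on the path of S between the endpoints of e, i.e. those f \<in> S whose removal
  disconnects the endpoints of e\<close>
definition on_cycle :: "(nat \<Rightarrow> 'v \<times> 'v) \<Rightarrow> nat set \<Rightarrow> nat \<Rightarrow> nat \<Rightarrow> bool" where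
  "on_cycle ends S e f \<longleftrightarrow> f = e \<or> (f \<in> S \<and> \<not> conn ends (S - {f}) (fst (ends e)) (snd (ends e)))"

datatype letter = L | D | l | d | Lbar | Dbar | lbar | dbar

definition int_active :: "nat \<Rightarrow> (nat \<Rightarrow> 'v \<times> 'v) \<Rightarrow> nat set \<Rightarrow> nat \<Rightarrow> bool" where
  "int_active m ends S e \<longleftrightarrow> (\<forall>f\<in>{1..m}. reconnects ends S e f \<longrightarrow> e \<le> f)"

definition ext_active :: "nat \<Rightarrow> (nat \<Rightarrow> 'v \<times> 'v) \<Rightarrow> nat set \<Rightarrow> nat \<Rightarrow> bool" where
  "ext_active m ends S e \<longleftrightarrow> (\<forall>f\<in>{1..m}. on_cycle ends S e f \<longrightarrow> e \<le> f)"

definition act :: "nat \<Rightarrow> (nat \<Rightarrow> 'v \<times> 'v) \<Rightarrow> (nat \<Rightarrow> bool) \<Rightarrow> nat set \<Rightarrow> nat \<Rightarrow> letter" where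
  "act m ends pos S e =
     (if e \<in> S then
        (if int_active m ends S e then (if pos e then L else Lbar) else (if pos e then D else Dbar))
      else
        (if ext_active m ends S e then (if pos e then l else lbar) else (if pos e then d else dbar)))"

definition activity_word :: "nat \<Rightarrow> (nat \<Rightarrow> 'v \<times> 'v) \<Rightarrow> (nat \<Rightarrow> bool) \<Rightarrow> nat set \<Rightarrow> letter list" where
  "activity_word m ends pos S = map (act m ends pos S) [1..<m+1]"

end

theory Submission
  imports Defs
begin

lemma conn_sym:
  assumes "conn ends F x y" shows "conn ends F y x"
proof -
  have "(x,y) \<in> (adj ends F)\<^sup>*" using assms by (simp add: conn_def)
  then have "(y,x) \<in> (adj ends F)\<^sup>*"
  proof (induction rule: rtrancl_induct)
    case base then show ?case by simp
  next
    case (step z w)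
    have "(w,z) \<in> adj ends F" using step(2) by (auto simp: adj_def)
    then show ?case using step(3) by (rule converse_rtrancl_into_rtrancl)
  qed
  then show ?thesis by (simp add: conn_def)
qed

lemma conn_mono:
  assumes "F \<subseteq> F'" "conn ends F x y" shows "conn ends F' x y"
proof -
  have "adj ends F \<subseteq> adj ends F'" using assms(1) unfolding adj_def by blast
  then show ?thesis using assms(2) unfolding conn_def by (meson rtrancl_mono subsetD)
qed

lemma conn_edge:
  assumes "f \<in> F" shows "conn ends F (fst (ends f)) (snd (ends f))"
proof -
  have "(fst (ends f), snd (ends f)) \<in> adj ends F" using assms unfolding adj_def by force
  then show ?thesis unfolding conn_def by (rule r_into_rtrancl)
qed

lemma conn_closed:
  assumes cl: "\<And>x y. (x,y) \<in> adj ends F \<Longrightarrow> x \<in> C \<Longrightarrow> y \<in> C"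
    and c: "conn ends F x y" and x: "x \<in> C"
  shows "y \<in> C"
proof -
  have "(x,y) \<in> (adj ends F)\<^sup>*" using c by (simp add: conn_def)
  then show ?thesis
    by (induction rule: rtrancl_induct) (use x cl in auto)
qed

lemma conn_split:
  assumes "conn ends F x z"
  shows "conn ends (F - {g}) x z \<or> conn ends (F - {g}) x (fst (ends g))
         \<or> conn ends (F - {g}) x (snd (ends g))"
proof -
  have "(x,z) \<in> (adj ends F)\<^sup>*" using assms by (simp add: conn_def)
  then show ?thesis
  proof (induction rule: rtrancl_induct)
    case base then show ?case by (simp add: conn_def)
  next
    case (step y z)
    obtain f where f: "f \<in> F" "(y,z) = ends f \<or> (z,y) = ends f"
      using step(2) by (auto simp: adj_def)
    show ?case
    proof (cases "f = g")
      case True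
      have "y = fst (ends g) \<or> y = snd (ends g)" using f True
        by (metis fst_conv snd_conv)
      then show ?thesis using step(3) by auto
    next
      case False
      then have "(y,z) \<in> adj ends (F - {g})" using f by (auto simp: adj_def)
      then show ?thesis using step(3) unfolding conn_def
        by (meson rtrancl.rtrancl_into_rtrancl)
    qed
  qed
qed

lemma conn_last:
  assumes "conn ends F a z"
  shows "z = a \<or> (\<exists>f\<in>F. fst (ends f) = z \<or> snd (ends f) = z)"
proof -
  have "(a,z) \<in> (adj ends F)\<^sup>*" using assms by (simp add: conn_def)
  then show ?thesis
  proof (cases rule: rtrancl.cases)
    case (rtrancl_into_rtrancl y)
    then show ?thesis by (auto simp: adj_def) (metis fst_conv snd_conv)+
  qed simp
qed

lemma map_const_upt:
  assumes "\<And>t. a \<le> t \<Longrightarrow> t < b \<Longrightarrow> g t = c"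
  shows "map g [a..<b] = replicate (b - a) c"
proof -
  have "map g [a..<b] = map (\<lambda>_. c) [a..<b]" by (rule map_cong) (auto simp: assms)
  then show ?thesis by (simp add: map_replicate_const)
qed


locale L3 =
  fixes V :: "'v set" and m :: nat and ends :: "nat \<Rightarrow> 'v \<times> 'v" and pos :: "nat \<Rightarrow> bool"
    and S :: "nat set" and i k :: nat and vs :: "nat \<Rightarrow> 'v"
  assumes G: "graph V m ends"
    and range: "1 \<le> i" "i + k \<le> m" and kpos: "k > 0"
    and positive: "\<forall>r\<le>k. pos (i + r)"
    and path_dist: "inj_on vs {0..k+1}"
    and path_edges: "\<forall>r\<le>k. ends (i + r) = (vs r, vs (r + 1)) \<or> ends (i + r) = (vs (r + 1), vs r)"
    and deg2: "\<forall>r\<in>{1..k}. degree m ends (vs r) = 2"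
    and ST: "spanning_tree V m ends S"
begin

lemma vs_eq: "a \<le> k+1 \<Longrightarrow> b \<le> k+1 \<Longrightarrow> vs a = vs b \<longleftrightarrow> a = b"
  using path_dist by (auto simp: inj_on_def)

lemma pe: "r \<le> k \<Longrightarrow> ends (i + r) = (vs r, vs (r + 1)) \<or> ends (i + r) = (vs (r + 1), vs r)"
  using path_edges by auto

lemma S_sub: "S \<subseteq> {1..m}" using ST by (simp add: spanning_tree_def)

lemma S_conn: "x \<in> V \<Longrightarrow> y \<in> V \<Longrightarrow> conn ends S x y" using ST by (simp add: spanning_tree_def)

lemma S_tree: "r \<in> S \<Longrightarrow> \<not> conn ends (S - {r}) (fst (ends r)) (snd (ends r))"
  using ST by (simp add: spanning_tree_def)

lemma vs_V: assumes "t \<le> k + 1" shows "vs t \<in> V"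
proof (cases "t \<le> k")
  case True
  have "i + t \<in> {1..m}" using range True by auto
  then have "fst (ends (i+t)) \<in> V \<and> snd (ends (i+t)) \<in> V" using G by (simp add: graph_def)
  then show ?thesis using pe[OF True] by auto
next
  case False
  then have t: "t = k + 1" using assms by simp
  have "i + k \<in> {1..m}" using range by auto
  then have "fst (ends (i+k)) \<in> V \<and> snd (ends (i+k)) \<in> V" using G by (simp add: graph_def)
  then show ?thesis using pe[of k] t by auto
qed

lemma inc:
  assumes f: "f \<in> {1..m}" and t: "1 \<le> t" "t \<le> k"
    and fi: "fst (ends f) = vs t \<or> snd (ends f) = vs t"
  shows "f = i + t - 1 \<or> f = i + t"
proof (rule ccontr)
  assume nf: "\<not> ?thesis"
  define A where "A = {r\<in>{1..m}. fst (ends r) = vs t}"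
  define B where "B = {r\<in>{1..m}. snd (ends r) = vs t}"
  have d: "card A + card B = 2" using deg2 t by (simp add: degree_def A_def B_def)
  have fin: "finite A" "finite B" by (auto simp: A_def B_def)
  have p1: "i + (t - 1) \<in> A \<union> B"
  proof -
    have m: "i + (t-1) \<in> {1..m}" using range t by auto
    have tt: "t - 1 + 1 = t" using t by simp
    have "ends (i + (t-1)) = (vs (t-1), vs t) \<or> ends (i + (t-1)) = (vs t, vs (t-1))"
      using pe[of "t-1"] t tt by simp
    then have "fst (ends (i + (t-1))) = vs t \<or> snd (ends (i + (t-1))) = vs t" by auto
    then show ?thesis using m unfolding A_def B_def by blast
  qed
  have p2: "i + t \<in> A \<union> B"
  proof -
    have m: "i + t \<in> {1..m}" using range t by auto
    have "fst (ends (i + t)) = vs t \<or> snd (ends (i + t)) = vs t" using pe[of t] t by auto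
    then show ?thesis using m unfolding A_def B_def by blast
  qed
  have p3: "f \<in> A \<union> B" using f fi by (auto simp: A_def B_def)
  have "{i + (t-1), i + t, f} \<subseteq> A \<union> B" using p1 p2 p3 by auto
  then have "card {i + (t-1), i + t, f} \<le> card (A \<union> B)"
    using fin by (intro card_mono) auto
  moreover have "card {i + (t-1), i + t, f} = 3" using nf t by auto
  moreover have "card (A \<union> B) \<le> card A + card B" by (rule card_Un_le)
  ultimately show False using d by simp
qed

lemma nonint:
  assumes "f \<in> {1..m}" "f \<notin> {i..i+k}" "z = fst (ends f) \<or> z = snd (ends f)"
  shows "z \<notin> vs ` {1..k}"
proof
  assume "z \<in> vs ` {1..k}"
  then obtain t where t: "t \<in> {1..k}" "z = vs t" by auto
  then have "f = i + t - 1 \<or> f = i + t" using inc[of f t] assms by auto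
  then show False using assms(2) t by auto
qed

lemma interval_closed:
  assumes F: "F \<subseteq> {1..m}" and pq: "1 \<le> p" "p \<le> q" "q \<le> k"
    and nF: "i + p - 1 \<notin> F" "i + q \<notin> F"
    and c: "conn ends F x y" and x: "x \<in> vs ` {p..q}"
  shows "y \<in> vs ` {p..q}"
proof (rule conn_closed[OF _ c x])
  fix a b assume ab: "(a,b) \<in> adj ends F" and a: "a \<in> vs ` {p..q}"
  obtain f where f: "f \<in> F" "(a,b) = ends f \<or> (b,a) = ends f" using ab by (auto simp: adj_def)
  obtain t where t: "t \<in> {p..q}" "a = vs t" using a by auto
  have "fst (ends f) = vs t \<or> snd (ends f) = vs t" using f t by (metis fst_conv snd_conv)
  then have "f = i + t - 1 \<or> f = i + t" using inc[of f t] F f pq t by auto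
  then show "b \<in> vs ` {p..q}"
  proof
    assume e: "f = i + t - 1"
    then have tp: "t \<noteq> p" using nF f by auto
    have "b = fst (ends f) \<or> b = snd (ends f)" using f by (metis fst_conv snd_conv)
    moreover have "ends f = (vs (t-1), vs t) \<or> ends f = (vs t, vs (t-1))"
      using pe[of "t-1"] e t pq by (auto simp: Suc_diff_le)
    ultimately have "b = vs (t-1) \<or> b = vs t" by auto
    moreover have "t - 1 \<in> {p..q}" using t tp by auto
    ultimately show ?thesis using t by auto
  next
    assume e: "f = i + t"
    then have tq: "t \<noteq> q" using nF f by auto
    have "b = fst (ends f) \<or> b = snd (ends f)" using f by (metis fst_conv snd_conv)
    moreover have "ends f = (vs t, vs (t+1)) \<or> ends f = (vs (t+1), vs t)"
      using pe[of t] e t pq by auto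
    ultimately have "b = vs (t+1) \<or> b = vs t" by auto
    moreover have "t + 1 \<in> {p..q}" using t tq by auto
    ultimately show ?thesis using t by auto
  qed
qed

lemma interval_nc:
  assumes F: "F \<subseteq> {1..m}" and pq: "1 \<le> p" "p \<le> q" "q \<le> k"
    and nF: "i + p - 1 \<notin> F" "i + q \<notin> F"
    and x: "x \<in> vs ` {p..q}" and y: "y \<notin> vs ` {p..q}"
  shows "\<not> conn ends F x y \<and> \<not> conn ends F y x"
proof -
  have 1: "\<not> conn ends F x y" using interval_closed[OF F pq nF _ x] y by blast
  have "\<not> conn ends F y x"
  proof
    assume "conn ends F y x"
    then have "conn ends F x y" by (rule conn_sym)
    then show False using 1 by simp
  qed
  then show ?thesis using 1 by simp
qed

lemma at_most_one:
  assumes ab: "a < b" "b \<le> k" and n: "i + a \<notin> S" "i + b \<notin> S"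
  shows False
proof -
  have "conn ends S (vs b) (vs 0)" using S_conn vs_V ab by simp
  moreover have "vs b \<in> vs ` {a+1..b}" using ab by auto
  moreover have "vs 0 \<notin> vs ` {a+1..b}"
  proof
    assume "vs 0 \<in> vs ` {a+1..b}"
    then obtain t where "t \<in> {a+1..b}" "vs 0 = vs t" by auto
    then show False using vs_eq[of 0 t] ab by auto
  qed
  moreover have "i + (a + 1) - 1 \<notin> S" using n by simp
  moreover have "1 \<le> a + 1" "a + 1 \<le> b" using ab by auto
  ultimately show False using interval_nc[OF S_sub, of "a+1" b "vs b" "vs 0"] ab(2) n(2) by blast
qed


lemma act_in: "r \<le> k \<Longrightarrow> act m ends pos S (i+r) =
   (if i+r \<in> S then (if int_active m ends S (i+r) then L else D)
    else (if ext_active m ends S (i+r) then l else d))"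
  using positive by (simp add: act_def)

lemma path_nc:
  assumes F: "F \<subseteq> {1..m}" and pq: "1 \<le> p" "p \<le> q" "q \<le> k"
    and nF: "i + p - 1 \<notin> F" "i + q \<notin> F"
    and s: "s \<le> k" and x: "vs s \<in> vs ` {p..q}" and y: "vs (s+1) \<notin> vs ` {p..q}"
  shows "\<not> conn ends F (fst (ends (i+s))) (snd (ends (i+s)))"
  using pe[OF s] interval_nc[OF F pq nF x y] by auto

lemma path_nc':
  assumes F: "F \<subseteq> {1..m}" and pq: "1 \<le> p" "p \<le> q" "q \<le> k"
    and nF: "i + p - 1 \<notin> F" "i + q \<notin> F"
    and s: "s \<le> k" and x: "vs (s+1) \<in> vs ` {p..q}" and y: "vs s \<notin> vs ` {p..q}"
  shows "\<not> conn ends F (fst (ends (i+s))) (snd (ends (i+s)))"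
  using pe[OF s] interval_nc[OF F pq nF x y] by auto

lemma vs_notin: "a \<le> k+1 \<Longrightarrow> a \<notin> A \<Longrightarrow> A \<subseteq> {0..k+1} \<Longrightarrow> vs a \<notin> vs ` A"
proof
  assume a: "a \<le> k+1" "a \<notin> A" "A \<subseteq> {0..k+1}" "vs a \<in> vs ` A"
  then obtain t where "t \<in> A" "vs a = vs t" by auto
  then show False using vs_eq[of a t] a by auto
qed

lemma in_S_miss:
  assumes miss: "{i..i+k} - S = {i+j}" and t: "t \<le> k" "t \<noteq> j"
  shows "i + t \<in> S"
proof (rule ccontr)
  assume "i + t \<notin> S"
  then have "i + t \<in> {i..i+k} - S" using t by auto
  then show False using miss t by auto
qed

lemma D_after:
  assumes s: "s \<le> k" "j < s" and miss: "{i..i+k} - S = {i+j}"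
  shows "act m ends pos S (i+s) = D"
proof -
  have sS: "i + s \<in> S" using in_S_miss[OF miss] s by auto
  have jS: "i + j \<notin> S" using miss by auto
  have F: "S - {i+s} \<subseteq> {1..m}" using S_sub by auto
  have "\<not> conn ends (S - {i+s}) (fst (ends (i+j))) (snd (ends (i+j)))"
  proof (rule path_nc'[OF F, of "j+1" s])
    show "vs j \<notin> vs ` {j + 1..s}" using s by (intro vs_notin) auto
  qed (use s jS in auto)
  then have "reconnects ends S (i+s) (i+j)" by (simp add: reconnects_def)
  moreover have "i + j \<in> {1..m}" using range s by auto
  ultimately have "\<not> int_active m ends S (i+s)" using s by (auto simp: int_active_def)
  then show ?thesis using act_in[OF s(1)] sS by simp
qed

lemma d_at:
  assumes j: "0 < j" "j \<le> k" and miss: "{i..i+k} - S = {i+j}"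
  shows "act m ends pos S (i+j) = d"
proof -
  have iS: "i \<in> S" using in_S_miss[OF miss, of 0] j by auto
  have jS: "i + j \<notin> S" using miss by auto
  have F: "S - {i} \<subseteq> {1..m}" using S_sub by auto
  have "\<not> conn ends (S - {i}) (fst (ends (i+j))) (snd (ends (i+j)))"
  proof (rule path_nc[OF F, of 1 j])
    show "vs (j+1) \<notin> vs ` {1..j}" using j by (intro vs_notin) auto
  qed (use j jS in auto)
  then have "on_cycle ends S (i+j) i" using iS by (simp add: on_cycle_def)
  moreover have "i \<in> {1..m}" using range by auto
  ultimately have "\<not> ext_active m ends S (i+j)" using j by (auto simp: ext_active_def)
  then show ?thesis using act_in[OF j(2)] jS by simp
qed

lemma first_letter:
  assumes "i \<notin> S"
  shows "act m ends pos S i = l \<or> act m ends pos S i = d"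
  using act_in[of 0] assms by simp

lemma L_before:
  assumes j: "j \<le> k" "s < j" and miss: "{i..i+k} - S = {i+j}"
  shows "act m ends pos S (i+s) = L"
proof -
  have sk: "s \<le> k" using j by simp
  have sS: "i + s \<in> S" using in_S_miss[OF miss, of s] j by auto
  have jS: "i + j \<notin> S" using miss by auto
  define F where "F = S - {i+s}"
  have F: "F \<subseteq> {1..m}" using S_sub by (auto simp: F_def)
  have nF: "i + (s+1) - 1 \<notin> F" "i + j \<notin> F" using jS by (auto simp: F_def)
  have pq: "1 \<le> s + 1" "s + 1 \<le> j" "j \<le> k" using j by auto
  have toS: "conn ends F z (vs s)" if z: "z \<in> V" "z \<notin> vs ` {s+1..j}" for z
  proof -
    have "vs s \<in> V" using vs_V sk by simp
    then have "conn ends S z (vs s)" using S_conn z(1) by blast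
    then have "conn ends F z (vs s) \<or> conn ends F z (fst (ends (i+s))) \<or> conn ends F z (snd (ends (i+s)))"
      unfolding F_def by (rule conn_split)
    moreover have "fst (ends (i+s)) \<in> {vs s, vs (s+1)}" "snd (ends (i+s)) \<in> {vs s, vs (s+1)}"
      using pe[OF sk] by auto
    ultimately have "conn ends F z (vs s) \<or> conn ends F z (vs (s+1))" by auto
    moreover have "\<not> conn ends F z (vs (s+1))"
    proof
      assume "conn ends F z (vs (s+1))"
      then have "conn ends F (vs (s+1)) z" by (rule conn_sym)
      moreover have "vs (s+1) \<in> vs ` {s+1..j}" using j by auto
      ultimately have "z \<in> vs ` {s+1..j}" using interval_closed[OF F pq nF] by blast
      then show False using z by simp
    qed
    ultimately show ?thesis by simp
  qed
  have "int_active m ends S (i+s)"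
    unfolding int_active_def
  proof (intro ballI impI)
    fix f assume f: "f \<in> {1..m}" and rc: "reconnects ends S (i+s) f"
    show "i + s \<le> f"
    proof (rule ccontr)
      assume lt: "\<not> i + s \<le> f"
      have ni: "z \<notin> vs ` {s+1..j}" if "z = fst (ends f) \<or> z = snd (ends f)" for z
      proof
        assume "z \<in> vs ` {s+1..j}"
        then obtain t where t: "t \<in> {s+1..j}" "z = vs t" by auto
        then have "f = i + t - 1 \<or> f = i + t" using inc[of f t] f that j by auto
        then show False using lt t by auto
      qed
      have V: "fst (ends f) \<in> V" "snd (ends f) \<in> V" using G f by (auto simp: graph_def)
      have c1: "conn ends F (fst (ends f)) (vs s)" using toS[OF V(1) ni] by blast
      have "conn ends F (snd (ends f)) (vs s)" using toS[OF V(2) ni] by blast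
      then have c2: "conn ends F (vs s) (snd (ends f))" by (rule conn_sym)
      have "conn ends F (fst (ends f)) (snd (ends f))"
        using c1 c2 unfolding conn_def by (rule rtrancl_trans)
      then show False using rc by (simp add: reconnects_def F_def)
    qed
  qed
  then show ?thesis using act_in[OF sk] sS by simp
qed


lemma c1_reconn:
  assumes allS: "{i..i+k} \<subseteq> S" and r: "r \<le> k" and f: "f \<in> {1..m}" "f \<notin> {i..i+k}"
  shows "reconnects ends S (i+r) f \<longleftrightarrow> \<not> conn ends (S - {i..i+k}) (fst (ends f)) (snd (ends f))"
  unfolding reconnects_def
proof
  assume nc: "\<not> conn ends (S - {i + r}) (fst (ends f)) (snd (ends f))"
  show "\<not> conn ends (S - {i..i+k}) (fst (ends f)) (snd (ends f))"
  proof
    assume c: "conn ends (S - {i..i+k}) (fst (ends f)) (snd (ends f))"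
    have "S - {i..i+k} \<subseteq> S - {i+r}" using r by auto
    from conn_mono[OF this c] show False using nc by simp
  qed
next
  define T where "T = S - {i..i+k}"
  define a where "a = fst (ends f)"
  define b where "b = snd (ends f)"
  assume nT: "\<not> conn ends (S - {i..i+k}) (fst (ends f)) (snd (ends f))"
  then have nT: "\<not> conn ends T a b" by (simp add: T_def a_def b_def)
  have ani: "a \<notin> vs ` {1..k}" using nonint[OF f] a_def by simp
  have bni: "b \<notin> vs ` {1..k}" using nonint[OF f] b_def by simp
  have reachni: "z \<notin> vs ` {1..k}" if "conn ends T a z" for z
  proof -
    from conn_last[OF that] show ?thesis
    proof
      assume "z = a" then show ?thesis using ani by simp
    next
      assume "\<exists>f\<in>T. fst (ends f) = z \<or> snd (ends f) = z"
      then obtain f' where f': "f' \<in> T" "z = fst (ends f') \<or> z = snd (ends f')" by auto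
      have "f' \<in> {1..m}" "f' \<notin> {i..i+k}" using f'(1) S_sub by (auto simp: T_def)
      then show ?thesis using nonint f'(2) by blast
    qed
  qed
  define C where "C = {z. conn ends T a z} \<union> (if conn ends T a (vs 0) then vs ` {1..r} else {})
     \<union> (if conn ends T a (vs (k+1)) then vs ` {r+1..k} else {})"
  have B0: "vs t \<in> C \<longleftrightarrow> conn ends T a (vs 0)" if t: "t \<le> r" for t
  proof (cases "t = 0")
    case True
    have "vs 0 \<notin> vs ` {1..r}" "vs 0 \<notin> vs ` {r+1..k}" by (rule vs_notin; use r in auto)+
    then show ?thesis using True by (auto simp: C_def)
  next
    case False
    have "vs t \<in> vs ` {1..k}" using False t r by auto
    then have "\<not> conn ends T a (vs t)" using reachni by blast
    moreover have "vs t \<in> vs ` {1..r}" using False t by auto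
    moreover have "vs t \<notin> vs ` {r+1..k}" using t r by (intro vs_notin) auto
    ultimately show ?thesis by (auto simp: C_def)
  qed
  have B1: "vs t \<in> C \<longleftrightarrow> conn ends T a (vs (k+1))" if t: "r < t" "t \<le> k + 1" for t
  proof (cases "t = k + 1")
    case True
    have "vs (k+1) \<notin> vs ` {1..r}" "vs (k+1) \<notin> vs ` {r+1..k}" by (rule vs_notin; use r in auto)+
    then show ?thesis using True by (auto simp: C_def)
  next
    case False
    have "vs t \<in> vs ` {1..k}" using False t r by auto
    then have "\<not> conn ends T a (vs t)" using reachni by blast
    moreover have "vs t \<in> vs ` {r+1..k}" using False t by auto
    moreover have "vs t \<notin> vs ` {1..r}" using t r by (intro vs_notin) auto
    ultimately show ?thesis by (auto simp: C_def)
  qed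
  have sub: "vs ` {1..r} \<union> vs ` {r+1..k} \<subseteq> vs ` {1..k}" using r by auto
  have cl: "y \<in> C" if xy: "(x,y) \<in> adj ends (S - {i+r})" and x: "x \<in> C" for x y
  proof -
    obtain g where g: "g \<in> S - {i+r}" "(x,y) = ends g \<or> (y,x) = ends g"
      using xy by (auto simp: adj_def)
    have xy2: "x = fst (ends g) \<or> x = snd (ends g)" "y = fst (ends g) \<or> y = snd (ends g)"
      using g(2) by (metis fst_conv snd_conv)+
    show ?thesis
    proof (cases "g \<in> {i..i+k}")
      case True
      define s where "s = g - i"
      have s: "s \<le> k" "g = i + s" using True by (auto simp: s_def)
      have sr: "s \<noteq> r" using s g by auto
      have ep: "fst (ends g) \<in> {vs s, vs (s+1)}" "snd (ends g) \<in> {vs s, vs (s+1)}"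
        using pe[OF s(1)] s by auto
      have xs: "x = vs s \<or> x = vs (s+1)" "y = vs s \<or> y = vs (s+1)" using ep xy2 by auto
      show ?thesis
      proof (cases "s < r")
        case True
        have "x \<in> C \<longleftrightarrow> conn ends T a (vs 0)" using xs(1) B0[of s] B0[of "s+1"] True by auto
        moreover have "y \<in> C \<longleftrightarrow> conn ends T a (vs 0)" using xs(2) B0[of s] B0[of "s+1"] True by auto
        ultimately show ?thesis using x by simp
      next
        case False
        then have sr': "r < s" using sr by simp
        have "x \<in> C \<longleftrightarrow> conn ends T a (vs (k+1))" using xs(1) B1[of s] B1[of "s+1"] sr' s by auto
        moreover have "y \<in> C \<longleftrightarrow> conn ends T a (vs (k+1))" using xs(2) B1[of s] B1[of "s+1"] sr' s by auto
        ultimately show ?thesis using x by simp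
      qed
    next
      case False
      have gT: "g \<in> T" using g(1) False by (auto simp: T_def)
      have gm: "g \<in> {1..m}" using g(1) S_sub by auto
      have "x \<notin> vs ` {1..k}" using nonint[OF gm False] xy2(1) by blast
      then have "conn ends T a x" using x sub by (auto simp: C_def split: if_splits)
      moreover have "(x,y) \<in> adj ends T" using gT g(2) by (auto simp: adj_def)
      ultimately have "conn ends T a y" unfolding conn_def by (rule rtrancl_into_rtrancl)
      then show ?thesis by (simp add: C_def)
    qed
  qed
  show "\<not> conn ends (S - {i + r}) (fst (ends f)) (snd (ends f))"
  proof
    assume c: "conn ends (S - {i + r}) (fst (ends f)) (snd (ends f))"
    have aC: "a \<in> C" by (simp add: C_def conn_def)
    have "b \<in> C" using conn_closed[of ends "S - {i+r}" C, OF cl] c aC by (simp add: a_def b_def)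
    then have "conn ends T a b" using bni sub by (auto simp: C_def split: if_splits)
    then show False using nT by simp
  qed
qed

lemma c1_int:
  assumes allS: "{i..i+k} \<subseteq> S" and r: "r \<le> k"
  shows "int_active m ends S (i+r) \<longleftrightarrow>
    (\<forall>f\<in>{1..m}. f \<notin> {i..i+k} \<longrightarrow> \<not> conn ends (S - {i..i+k}) (fst (ends f)) (snd (ends f)) \<longrightarrow> i + r \<le> f)"
  unfolding int_active_def
proof (intro iffI ballI impI)
  fix f assume H: "\<forall>f\<in>{1..m}. reconnects ends S (i + r) f \<longrightarrow> i + r \<le> f"
    and f: "f \<in> {1..m}" "f \<notin> {i..i+k}" "\<not> conn ends (S - {i..i+k}) (fst (ends f)) (snd (ends f))"
  then show "i + r \<le> f" using c1_reconn[OF allS r f(1,2)] by blast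
next
  fix f assume H: "\<forall>f\<in>{1..m}. f \<notin> {i..i+k} \<longrightarrow> \<not> conn ends (S - {i..i+k}) (fst (ends f)) (snd (ends f)) \<longrightarrow> i + r \<le> f"
    and f: "f \<in> {1..m}" and rc: "reconnects ends S (i + r) f"
  show "i + r \<le> f"
  proof (cases "f \<in> {i..i+k}")
    case True
    show ?thesis
    proof (rule ccontr)
      assume "\<not> i + r \<le> f"
      then have "f \<in> S - {i+r}" using True allS by auto
      then have "conn ends (S - {i+r}) (fst (ends f)) (snd (ends f))" by (rule conn_edge)
      then show False using rc by (simp add: reconnects_def)
    qed
  next
    case False
    then show ?thesis using H f rc c1_reconn[OF allS r f False] by blast
  qed
qed

lemma case1:
  assumes allS: "{i..i+k} \<subseteq> S"
  shows "(\<forall>r\<le>k. act m ends pos S (i+r) = L) \<or> (\<forall>r\<le>k. act m ends pos S (i+r) = D)"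
proof (cases "\<exists>f\<in>{1..m}. f \<notin> {i..i+k} \<and> \<not> conn ends (S - {i..i+k}) (fst (ends f)) (snd (ends f)) \<and> f < i")
  case True
  then obtain f where f: "f\<in>{1..m}" "f \<notin> {i..i+k}" "\<not> conn ends (S - {i..i+k}) (fst (ends f)) (snd (ends f))" "f < i"
    by blast
  have "act m ends pos S (i+r) = D" if r: "r \<le> k" for r
  proof -
    have "\<not> i + r \<le> f" using f(4) by simp
    then have "\<not> int_active m ends S (i+r)" unfolding c1_int[OF allS r] using f(1,2,3) by blast
    moreover have "i + r \<in> S" using allS r by auto
    ultimately show ?thesis using act_in[OF r] by simp
  qed
  then show ?thesis by blast
next
  case False
  have "act m ends pos S (i+r) = L" if r: "r \<le> k" for r
  proof -
    have "int_active m ends S (i+r)"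
      unfolding c1_int[OF allS r]
    proof (intro ballI impI)
      fix f assume "f \<in> {1..m}" "f \<notin> {i..i+k}" "\<not> conn ends (S - {i..i+k}) (fst (ends f)) (snd (ends f))"
      then have "\<not> f < i" using False by blast
      then show "i + r \<le> f" using \<open>f \<notin> {i..i+k}\<close> r by auto
    qed
    moreover have "i + r \<in> S" using allS r by auto
    ultimately show ?thesis using act_in[OF r] by simp
  qed
  then show ?thesis by blast
qed

end


theorem lemma3p1:
  fixes V :: "'v set" and m :: nat and ends :: "nat \<Rightarrow> 'v \<times> 'v" and pos :: "nat \<Rightarrow> bool"
    and S :: "nat set" and i k :: nat and vs :: "nat \<Rightarrow> 'v"
  assumes G: "graph V m ends"
    and range: "1 \<le> i" "i + k \<le> m" and kpos: "k > 0"
    and positive: "\<forall>r\<le>k. pos (i + r)"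
    and path_dist: "inj_on vs {0..k+1}"
    and path_edges: "\<forall>r\<le>k. ends (i + r) = (vs r, vs (r + 1)) \<or> ends (i + r) = (vs (r + 1), vs r)"
    and deg2: "\<forall>r\<in>{1..k}. degree m ends (vs r) = 2"
    and ST: "spanning_tree V m ends S"
  shows "let w = take (k + 1) (drop (i - 1) (activity_word m ends pos S)) in
           ({i..i+k} \<subseteq> S \<and> (w = replicate (k + 1) L \<or> w = replicate (k + 1) D))
         \<or> (\<exists>j. 0 < j \<and> j \<le> k \<and> {i..i+k} - S = {i + j}
                \<and> w = replicate j L @ [d] @ replicate (k - j) D)
         \<or> ({i..i+k} - S = {i} \<and> (w = l # replicate k D \<or> w = d # replicate k D))"
proof -
  interpret L3 V m ends pos S i k vs
    using assms by (simp add: L3_def)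
  define A where "A = (\<lambda>t. act m ends pos S (i+t))"
  have w: "take (k + 1) (drop (i - 1) (activity_word m ends pos S)) = map A [0..<k+1]"
  proof -
    have e1: "drop (i-1) [1..<m+1] = [i..<m+1]" using range by simp
    have e2: "take (k+1) [i..<m+1] = [i..<i+(k+1)]" using range by (intro take_upt) simp
    have "take (k + 1) (drop (i - 1) (activity_word m ends pos S)) = map (act m ends pos S) [i..<i+(k+1)]"
      unfolding activity_word_def by (simp only: drop_map take_map e1 e2)
    also have "\<dots> = map A [0..<k+1]" by (rule nth_equalityI) (simp_all add: A_def del: upt_Suc)
    finally show ?thesis .
  qed
  show ?thesis
  proof (cases "{i..i+k} \<subseteq> S")
    case True
    from case1[OF True] have c: "map A [0..<k+1] = replicate (k + 1) L \<or> map A [0..<k+1] = replicate (k + 1) D"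
    proof
      assume "\<forall>r\<le>k. act m ends pos S (i+r) = L"
      then have "map A [0..<k+1] = replicate (k+1-0) L" by (intro map_const_upt) (auto simp: A_def)
      then show ?thesis by simp
    next
      assume "\<forall>r\<le>k. act m ends pos S (i+r) = D"
      then have "map A [0..<k+1] = replicate (k+1-0) D" by (intro map_const_upt) (auto simp: A_def)
      then show ?thesis by simp
    qed
    show ?thesis unfolding Let_def w using True c by blast
  next
    case False
    then obtain s where s: "s \<le> k" "i + s \<notin> S"
      by (metis add_diff_inverse_nat atLeastAtMost_iff nat_add_left_cancel_le not_less subsetI)
    have miss: "{i..i+k} - S = {i+s}"
    proof
      show "{i + s} \<subseteq> {i..i + k} - S" using s by auto
      show "{i..i + k} - S \<subseteq> {i + s}"
      proof
        fix x assume x: "x \<in> {i..i + k} - S"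
        define t where "t = x - i"
        have t: "t \<le> k" "x = i + t" "i + t \<notin> S" using x by (auto simp: t_def)
        have "t = s"
        proof (rule ccontr)
          assume "t \<noteq> s"
          then have "t < s \<or> s < t" by auto
          then show False using at_most_one t s by blast
        qed
        then show "x \<in> {i + s}" using t by simp
      qed
    qed
    show ?thesis
    proof (cases "s = 0")
      case True
      have iS: "i \<notin> S" using s True by simp
      have mi: "{i..i+k} - S = {i}" using miss True by simp
      have "[0..<k+1] = 0 # [1..<k+1]" by (simp add: upt_conv_Cons)
      then have "map A [0..<k+1] = A 0 # map A [1..<k+1]" by simp
      moreover have "map A [1..<k+1] = replicate (k+1-1) D"
        using D_after[OF _ _ miss] True by (intro map_const_upt) (auto simp: A_def)
      moreover have "A 0 = l \<or> A 0 = d" using first_letter[OF iS] by (simp add: A_def)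
      ultimately have "map A [0..<k+1] = l # replicate k D \<or> map A [0..<k+1] = d # replicate k D"
        by auto
      then show ?thesis unfolding Let_def w using mi by blast
    next
      case False
      have "[0..<k+1] = [0..<s] @ [s..<k+1]"
        using upt_add_eq_append[of 0 s "k+1-s"] s by simp
      also have "[s..<k+1] = s # [s+1..<k+1]" using s by (simp add: upt_conv_Cons)
      finally have "map A [0..<k+1] = map A [0..<s] @ [A s] @ map A [s+1..<k+1]" by simp
      moreover have "map A [0..<s] = replicate (s-0) L"
        using L_before[OF s(1) _ miss] by (intro map_const_upt) (auto simp: A_def)
      moreover have "map A [s+1..<k+1] = replicate (k+1-(s+1)) D"
        using D_after[OF _ _ miss] by (intro map_const_upt) (auto simp: A_def)
      moreover have "A s = d" using d_at[OF _ s(1) miss] False by (simp add: A_def)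
      ultimately have "map A [0..<k+1] = replicate s L @ [d] @ replicate (k - s) D" by simp
      then have "\<exists>j. 0 < j \<and> j \<le> k \<and> {i..i+k} - S = {i + j}
                \<and> map A [0..<k+1] = replicate j L @ [d] @ replicate (k - j) D"
        using False s miss by blast
      then show ?thesis unfolding Let_def w by blast
    qed
  qed
qed

end
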